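(* Let $n,m$ be positive integers and let $R_1,\dots,R_n:\{0,\dots,m\}\to\mathbb{R}$ be convex functions with $R_j(0)=0$. Then for every $k$ with $0\le k\le nm$ there exists an optimal $k$-profile $\mathbf{x}=(x_1,\dots,x_n)$ in which at most one index $j$ satisfies $0<x_j<m$.
   Context: A function $R:\{0,\dots,m\}\to\mathbb{R}$ is convex if $R(x+1)-R(x)$ is non-decreasing in $x$. A $k$-profile is a vector $\mathbf{x}=(x_1,\dots,x_n)$ with $x_j\in\{0,\dots,m\}$ and $\sum_j x_j=k$; it is optimal if its revenue $\sum_j R_j(x_j)$ is maximum among all $k$-profiles. *)

theory Defs
  imports Complex_Main
begin

definition convex_on_grid :: "nat \<Rightarrow> (nat \<Rightarrow> real) \<Rightarrow> bool" where
  "convex_on_grid m R \<longleftrightarrow>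
     (\<forall>x y. x \<le> y \<and> y + 1 \<le> m \<longrightarrow> R (x + 1) - R x \<le> R (y + 1) - R y)"

definition profile :: "nat \<Rightarrow> nat \<Rightarrow> nat \<Rightarrow> (nat \<Rightarrow> nat) \<Rightarrow> bool" where
  "profile n m k x \<longleftrightarrow> (\<forall>j\<in>{1..n}. x j \<le> m) \<and> (\<forall>j. j \<notin> {1..n} \<longrightarrow> x j = 0)
     \<and> (\<Sum>j\<in>{1..n}. x j) = k"

definition revenue :: "nat \<Rightarrow> (nat \<Rightarrow> nat \<Rightarrow> real) \<Rightarrow> (nat \<Rightarrow> nat) \<Rightarrow> real" where
  "revenue n R x = (\<Sum>j\<in>{1..n}. R j (x j))"

definition optimal_profile ::
  "nat \<Rightarrow> nat \<Rightarrow> (nat \<Rightarrow> nat \<Rightarrow> real) \<Rightarrow> nat \<Rightarrow> (nat \<Rightarrow> nat) \<Rightarrow> bool" where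
  "optimal_profile n m R k x \<longleftrightarrow> profile n m k x \<and>
     (\<forall>y. profile n m k y \<longrightarrow> revenue n R y \<le> revenue n R x)"

end

theory Submission imports Defs begin

lemma conv_max:
  fixes g :: "nat \<Rightarrow> real"
  assumes cv: "\<And>u. lo \<le> u \<Longrightarrow> u+2 \<le> hi \<Longrightarrow> g(u+1) - g u \<le> g(u+2) - g(u+1)"
    and t: "lo \<le> t" "t \<le> hi"
  shows "g t \<le> max (g lo) (g hi)"
proof -
  define d where "d u = g(u+1) - g u" for u
  have mono: "d u \<le> d v" if "lo \<le> u" "u \<le> v" "v+1 \<le> hi" for u v
    using that(2,3)
  proof (induction v rule: dec_induct)
    case base then show ?case by simp
  next
    case (step v)
    have "d v \<le> d (v+1)" using cv[of v] step.hyps that(1) step.prems unfolding d_def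
      by (simp add: add.commute numeral_2_eq_2)
    then show ?case using step by simp
  qed
  have a: "g t \<le> g L" if "d t \<ge> 0" "t \<le> L" "L \<le> hi" for L
    using that(2,3)
  proof (induction L rule: dec_induct)
    case base then show ?case by simp
  next
    case (step L)
    have "d t \<le> d L" using mono[of t L] t step by simp
    then show ?case using step that(1) unfolding d_def by simp
  qed
  have b: "g w \<le> g lo" if "d (t-1) \<le> 0" "lo \<le> w" "w \<le> t" for w
    using that(2,3)
  proof (induction w rule: dec_induct)
    case base then show ?case by simp
  next
    case (step w)
    have "d w \<le> d (t-1)" using mono[of w "t-1"] t step by simp
    then show ?case using step that(1) unfolding d_def by simp
  qed
  show ?thesis
  proof (cases "t = hi")
    case True then show ?thesis by simp
  next
    case False
    show ?thesis
    proof (cases "d t \<ge> 0")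
      case True then show ?thesis using a[of hi] t by simp
    next
      case nn: False
      show ?thesis
      proof (cases "t = lo")
        case True then show ?thesis by simp
      next
        case False
        have "d (t-1) \<le> d t" using mono[of "t-1" t] t False \<open>t \<noteq> hi\<close> by simp
        then show ?thesis using b[of t] nn t by simp
      qed
    qed
  qed
qed

lemma sum_two:
  fixes f h :: "nat \<Rightarrow> 'a::comm_monoid_add"
  assumes "finite A" "i \<in> A" "j \<in> A" "i \<noteq> j" "\<And>l. l \<in> A \<Longrightarrow> l \<noteq> i \<Longrightarrow> l \<noteq> j \<Longrightarrow> h l = f l"
  shows "sum h A + (f i + f j) = sum f A + (h i + h j)"
proof -
  have e: "sum h (A - {i} - {j}) = sum f (A - {i} - {j})" by (rule sum.cong) (auto simp: assms)
  have "sum h A = h i + (h j + sum h (A - {i} - {j}))"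
    using assms by (simp add: sum.remove[of A i] sum.remove[of "A-{i}" j])
  moreover have "sum f A = f i + (f j + sum f (A - {i} - {j}))"
    using assms by (simp add: sum.remove[of A i] sum.remove[of "A-{i}" j])
  ultimately show ?thesis using e by (simp add: ac_simps)
qed

lemma profile_exists: "k \<le> n * m \<Longrightarrow> \<exists>x. profile n m k x"
proof (induction k)
  case 0
  then show ?case by (rule_tac x="\<lambda>_. 0" in exI) (simp add: profile_def)
next
  case (Suc k)
  then obtain x where x: "profile n m k x" by auto
  have "\<exists>j\<in>{1..n}. x j < m"
  proof (rule ccontr)
    assume "\<not> ?thesis"
    then have "\<forall>j\<in>{1..n}. x j = m" using x by (auto simp: profile_def not_less intro: antisym)
    then have "k = n * m" using x by (simp add: profile_def)
    then show False using Suc by simp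
  qed
  then obtain j where j: "j \<in> {1..n}" "x j < m" by auto
  let ?y = "x(j := Suc (x j))"
  have "(\<Sum>l\<in>{1..n}. ?y l) = Suc k"
  proof -
    have "(\<Sum>l\<in>{1..n}. ?y l) = ?y j + (\<Sum>l\<in>{1..n}-{j}. ?y l)" using j by (simp add: sum.remove)
    also have "(\<Sum>l\<in>{1..n}-{j}. ?y l) = (\<Sum>l\<in>{1..n}-{j}. x l)" by (rule sum.cong) auto
    also have "(\<Sum>l\<in>{1..n}. x l) = x j + (\<Sum>l\<in>{1..n}-{j}. x l)" using j by (simp add: sum.remove)
    ultimately show ?thesis using x by (simp add: profile_def)
  qed
  then show ?case using x j by (rule_tac x="?y" in exI) (auto simp: profile_def)
qed


theorem lemma4:
  fixes n m k :: nat and R :: "nat \<Rightarrow> nat \<Rightarrow> real"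
  assumes "n > 0" and "m > 0"
    and "\<And>j. j \<in> {1..n} \<Longrightarrow> convex_on_grid m (R j)"
    and "\<And>j. j \<in> {1..n} \<Longrightarrow> R j 0 = 0"
    and "k \<le> n * m"
  shows "\<exists>x. optimal_profile n m R k x \<and> card {j\<in>{1..n}. 0 < x j \<and> x j < m} \<le> 1"
proof -
  note cvx = assms(3)
  define P where "P = {x. profile n m k x}"
  have "P \<subseteq> {f. \<forall>x. (x \<in> {1..n} \<longrightarrow> f x \<in> {0..m}) \<and> (x \<notin> {1..n} \<longrightarrow> f x = 0)}"
    by (auto simp: P_def profile_def)
  then have finP: "finite P" by (rule finite_subset) (intro finite_set_of_finite_funs; simp)
  obtain x0 where "profile n m k x0" using profile_exists[OF assms(5)] by auto
  then have neP: "P \<noteq> {}" by (auto simp: P_def)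
  define M where "M = Max (revenue n R ` P)"
  have "M \<in> revenue n R ` P" unfolding M_def using finP neP by (intro Max_in) auto
  then obtain xo where xo: "xo \<in> P" "revenue n R xo = M" by auto
  have Mge: "revenue n R y \<le> M" if "y \<in> P" for y unfolding M_def using finP that by simp
  have optI: "optimal_profile n m R k y" if "y \<in> P" "revenue n R y \<ge> M" for y
    using that Mge by (auto simp: optimal_profile_def P_def intro: order_trans)
  define F where "F x = {j\<in>{1..n}. 0 < x j \<and> x j < m}" for x :: "nat \<Rightarrow> nat"
  have "optimal_profile n m R k xo" using optI xo by simp
  then obtain x where xopt: "optimal_profile n m R k x"
    and xmin: "\<And>y. optimal_profile n m R k y \<Longrightarrow> card (F x) \<le> card (F y)"
    using ex_has_least_nat[where P="optimal_profile n m R k" and m="\<lambda>x. card (F x)"] by blast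
  have xP: "x \<in> P" and xM: "revenue n R x \<ge> M" using xopt xo
    by (auto simp: optimal_profile_def P_def)
  have xprof: "profile n m k x" using xP by (simp add: P_def)
  have "card (F x) \<le> 1"
  proof (rule ccontr)
    assume "\<not> card (F x) \<le> 1"
    moreover have "finite (F x)" by (simp add: F_def)
    ultimately obtain i j where ij: "i \<in> F x" "j \<in> F x" "i \<noteq> j"
      using card_le_Suc0_iff_eq[of "F x"] by auto
    then have ijn: "i \<in> {1..n}" "j \<in> {1..n}" and fi: "0 < x i" "x i < m" "0 < x j" "x j < m"
      by (auto simp: F_def)
    define s where "s = x i + x j"
    define lo where "lo = s - min s m"
    define hi where "hi = min s m"
    define g where "g t = R i t + R j (s - t)" for t
    have cg: "g(u+1) - g u \<le> g(u+2) - g(u+1)" if "lo \<le> u" "u+2 \<le> hi" for u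
    proof -
      have c1: "R i (u+1) - R i u \<le> R i (u+1+1) - R i (u+1)"
      proof -
        have "u+1+1 \<le> m" using that unfolding hi_def by auto
        then show ?thesis using cvx[OF ijn(1), unfolded convex_on_grid_def, rule_format, of u "u+1"] by simp
      qed
      define c where "c = s - u - 2"
      have cs: "s - u = c + 2" "s - (u+1) = c + 1" "s - (u+2) = c"
        using that unfolding c_def hi_def by auto
      have "c + 2 \<le> m" using that fi unfolding c_def lo_def hi_def s_def by auto
      then have c2: "R j (c+1) - R j c \<le> R j (c+1+1) - R j (c+1)"
        using cvx[OF ijn(2), unfolded convex_on_grid_def, rule_format, of c "c+1"] by simp
      show ?thesis using c1 c2 unfolding g_def cs by (simp add: numeral_2_eq_2)
    qed
    have t0: "lo \<le> x i" "x i \<le> hi" using fi unfolding lo_def hi_def s_def by auto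
    have gmax: "g (x i) \<le> max (g lo) (g hi)" by (rule conv_max[OF cg t0]) auto
    obtain t where t: "t = lo \<or> t = hi" and gt: "g (x i) \<le> g t"
      using gmax by (metis max_def)
    define y where "y = x(i := t, j := s - t)"
    have tb: "t \<le> m" "s - t \<le> m" "t \<le> s" using t fi unfolding lo_def hi_def s_def by auto
    have yi: "y i = t" and yj: "y j = s - t" using ij(3) by (auto simp: y_def)
    have yo: "y l = x l" if "l \<noteq> i" "l \<noteq> j" for l using that by (simp add: y_def)
    have "(\<Sum>l\<in>{1..n}. y l) + (x i + x j) = (\<Sum>l\<in>{1..n}. x l) + (y i + y j)"
      by (rule sum_two) (use ijn ij yo in auto)
    then have "(\<Sum>l\<in>{1..n}. y l) = k" using xprof yi yj tb unfolding profile_def s_def by simp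
    moreover have "\<forall>l\<in>{1..n}. y l \<le> m"
    proof
      fix l assume l: "l \<in> {1..n}"
      show "y l \<le> m"
      proof (cases "l = i \<or> l = j")
        case True then show ?thesis using yi yj tb by auto
      next
        case False then show ?thesis using yo[of l] xprof l unfolding profile_def by auto
      qed
    qed
    ultimately have yprof: "profile n m k y" using xprof yo ijn
      unfolding profile_def by auto
    have "revenue n R y + (R i (x i) + R j (x j)) = revenue n R x + (R i (y i) + R j (y j))"
      unfolding revenue_def by (rule sum_two) (use ijn ij yo in auto)
    moreover have "g (x i) = R i (x i) + R j (x j)" unfolding g_def s_def by simp
    ultimately have "revenue n R y \<ge> revenue n R x" using gt yi yj unfolding g_def by simp
    then have yopt: "optimal_profile n m R k y" using optI yprof xM by (auto simp: P_def)
    have sub: "F y \<subseteq> F x"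
    proof
      fix l assume l: "l \<in> F y"
      show "l \<in> F x"
      proof (cases "l = i \<or> l = j")
        case True then show ?thesis using ij by auto
      next
        case False then show ?thesis using yo[of l] l unfolding F_def by auto
      qed
    qed
    have "i \<notin> F y \<or> j \<notin> F y"
      using t yi yj unfolding F_def lo_def hi_def by (cases "s \<le> m") auto
    then have "F y \<subset> F x" using sub ij by auto
    then have "card (F y) < card (F x)" by (rule psubset_card_mono[rotated]) (simp add: F_def)
    then show False using xmin[OF yopt] by simp
  qed
  then show ?thesis using xopt unfolding F_def by blast
qed

end
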